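(* For every group $H$, the nullification functor $P_H$ in the category of groups is conditionally flat.
   Context: For a group homomorphism $\varphi\colon A\to B$, a group $M$ is $\varphi$-local if $\mathrm{Hom}(B,M)\to\mathrm{Hom}(A,M)$ is a bijection; the localization functor $L_\varphi$ assigns to each group $G$ a $\varphi$-local group $L_\varphi G$ with a natural homomorphism $G\to L_\varphi G$ initial among homomorphisms to $\varphi$-local groups. The nullification $P_H$ is $L_\varphi$ for $\varphi\colon H\to\{e\}$. For a functor $L$ on groups, a group extension $1\to N\to E\to Q\to 1$ is $L$-flat if $1\to LN\to LE\to LQ\to 1$ is again a short exact sequence; $L$ is conditionally flat if for every $L$-flat extension $1\to N\to E\to Q\to 1$ and every homomorphism $Q'\to Q$, the pullback extension $1\to N\to E\times_Q Q'\to Q'\to 1$ is $L$-flat. *)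

theory Defs
  imports "HOL-Algebra.Algebra"
begin

text \<open>A group M is H-null (i.e. local for the map H \<rightarrow> {e}): since Hom({e},M) is a
  singleton, Hom({e},M) \<rightarrow> Hom(H,M) is a bijection iff every homomorphism H \<rightarrow> M
  is trivial.\<close>
definition H_null :: "('h,'c) monoid_scheme \<Rightarrow> ('m,'d) monoid_scheme \<Rightarrow> bool" where
  "H_null H M \<longleftrightarrow> (\<forall>f \<in> hom H M. trivial_homomorphism H M f)"

text \<open>The nullification P_H G, realised as the quotient of G by the smallest normal
  subgroup R with G/R H-null (this quotient, with the projection G \<rightarrow> G/R, is the
  initial map from G to an H-null group).\<close>
definition null_kernel :: "('h,'c) monoid_scheme \<Rightarrow> ('g,'d) monoid_scheme \<Rightarrow> 'g set" where
  "null_kernel H G = \<Inter> {K. K \<lhd> G \<and> H_null H (G Mod K)}"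

definition PH :: "('h,'c) monoid_scheme \<Rightarrow> ('g,'d) monoid_scheme \<Rightarrow> 'g set monoid" where
  "PH H G = G Mod (null_kernel H G)"

definition PH_unit :: "('h,'c) monoid_scheme \<Rightarrow> ('g,'d) monoid_scheme \<Rightarrow> 'g \<Rightarrow> 'g set" where
  "PH_unit H G x = null_kernel H G #>\<^bsub>G\<^esub> x"

definition PH_map :: "('h,'c) monoid_scheme \<Rightarrow> ('a,'d) monoid_scheme \<Rightarrow> ('b,'e) monoid_scheme
    \<Rightarrow> ('a \<Rightarrow> 'b) \<Rightarrow> 'a set \<Rightarrow> 'b set" where
  "PH_map H G1 G2 f C = (f ` C) <#>\<^bsub>G2\<^esub> null_kernel H G2"

definition short_exact ::
  "('n,'a) monoid_scheme \<Rightarrow> ('e,'b) monoid_scheme \<Rightarrow> ('q,'c) monoid_scheme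
     \<Rightarrow> ('n \<Rightarrow> 'e) \<Rightarrow> ('e \<Rightarrow> 'q) \<Rightarrow> bool" where
  "short_exact N E Q i p \<longleftrightarrow>
     i \<in> hom N E \<and> p \<in> hom E Q \<and> inj_on i (carrier N) \<and>
     i ` carrier N = kernel E Q p \<and> p ` carrier E = carrier Q"

definition PH_flat ::
  "('h,'d) monoid_scheme \<Rightarrow> ('n,'a) monoid_scheme \<Rightarrow> ('e,'b) monoid_scheme \<Rightarrow> ('q,'c) monoid_scheme
     \<Rightarrow> ('n \<Rightarrow> 'e) \<Rightarrow> ('e \<Rightarrow> 'q) \<Rightarrow> bool" where
  "PH_flat H N E Q i p \<longleftrightarrow>
     short_exact (PH H N) (PH H E) (PH H Q) (PH_map H N E i) (PH_map H E Q p)"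

definition pullback_grp ::
  "('e,'a) monoid_scheme \<Rightarrow> ('r,'b) monoid_scheme \<Rightarrow> ('e \<Rightarrow> 'q) \<Rightarrow> ('r \<Rightarrow> 'q) \<Rightarrow> ('e \<times> 'r) monoid" where
  "pullback_grp E Q' p g =
     (E \<times>\<times> Q')\<lparr>carrier := {(x, y). x \<in> carrier E \<and> y \<in> carrier Q' \<and> p x = g y}\<rparr>"

end

theory Submission
  imports Defs
begin


lemma (in group) rcos_eq_iff:
  assumes "subgroup K G" "x \<in> carrier G" "y \<in> carrier G"
  shows "(K #> x = K #> y) \<longleftrightarrow> x \<otimes> inv y \<in> K"
proof
  assume "K #> x = K #> y"
  then have "x \<in> K #> y" using rcos_self[OF assms(2,1)] by simp
  then show "x \<otimes> inv y \<in> K" using subgroup.rcos_module_imp[OF assms(1) is_group assms(3)] by blast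
next
  assume "x \<otimes> inv y \<in> K"
  then have "x \<in> K #> y" using subgroup.rcos_module_rev[OF assms(1) is_group assms(3,2)] by blast
  then show "K #> x = K #> y" using repr_independence[OF _ assms(3,1)] by simp
qed

lemma (in group) rcos_eq_self_iff:
  assumes "subgroup K G" "x \<in> carrier G"
  shows "(K #> x = K) \<longleftrightarrow> x \<in> K"
  using rcos_eq_iff[OF assms one_closed] assms subgroup.subset[OF assms(1)]
  by simp

lemma (in group) aux1: "a \<in> carrier G \<Longrightarrow> b \<in> carrier G \<Longrightarrow> r \<in> carrier G \<Longrightarrow> (a \<otimes> (b \<otimes> r \<otimes> inv b)) \<otimes> b = (a \<otimes> b) \<otimes> r"
  by (simp add: m_assoc)
lemma (in group) aux2: "b \<in> carrier G \<Longrightarrow> r \<in> carrier G \<Longrightarrow> r \<otimes> b = b \<otimes> (inv b \<otimes> r \<otimes> inv (inv b))"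
  by (simp add: m_assoc) (simp add: m_assoc[symmetric])

lemma H_null_inj:
  assumes "group A" "group M" "H_null H M" "\<theta> \<in> hom A M" "inj_on \<theta> (carrier A)"
  shows "H_null H A"
  unfolding H_null_def
proof (intro ballI)
  fix f assume f: "f \<in> hom H A"
  show "trivial_homomorphism H A f" unfolding trivial_homomorphism_def
  proof (intro conjI ballI)
  show "f \<in> hom H A" by fact
  fix x assume x: "x \<in> carrier H"
  have "\<theta> \<circ> f \<in> hom H M" using f assms(4) hom_compose by blast
  then have "(\<theta> \<circ> f) x = \<one>\<^bsub>M\<^esub>" using assms(3) x unfolding H_null_def trivial_homomorphism_def by blast
  moreover have "\<theta> \<one>\<^bsub>A\<^esub> = \<one>\<^bsub>M\<^esub>"
    using assms by (simp add: group_hom.hom_one group_hom_axioms_def group_hom_def)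
  moreover have "f x \<in> carrier A" using f x hom_carrier by blast
  ultimately show "f x = \<one>\<^bsub>A\<^esub>" using assms(5) assms(1) group.is_monoid monoid.one_closed
    by (metis comp_apply inj_on_def)
qed
qed

lemma H_null_iso:
  assumes "group A" "group M" "H_null H A" "\<theta> \<in> iso A M"
  shows "H_null H M"
proof -
  have "inv_into (carrier A) \<theta> \<in> iso M A" using group.iso_set_sym[OF assms(1,4)] .
  then have "inv_into (carrier A) \<theta> \<in> hom M A" "inj_on (inv_into (carrier A) \<theta>) (carrier M)"
    by (auto simp add: iso_def bij_betw_def)
  then show ?thesis by (rule H_null_inj[OF assms(2,1,3)])
qed

lemma (in group) H_null_whole:
  shows "H_null H (G Mod carrier G)"
  unfolding H_null_def
proof (intro ballI)
  fix f assume f: "f \<in> hom H (G Mod carrier G)"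
  show "trivial_homomorphism H (G Mod carrier G) f" unfolding trivial_homomorphism_def
  proof (intro conjI ballI)
  show "f \<in> hom H (G Mod carrier G)" by fact
  fix x assume x: "x \<in> carrier H"
  have "f x \<in> carrier (G Mod carrier G)" using f x hom_carrier by blast
  then obtain y where "y \<in> carrier G" "f x = carrier G #> y" by (auto simp: carrier_FactGroup)
  then show "f x = \<one>\<^bsub>G Mod carrier G\<^esub>"
    using subgroup.rcos_const[OF subgroup_self is_group] by simp
qed
qed

lemma (in group) R_facts:
  shows "null_kernel H G \<lhd> G" "H_null H (G Mod null_kernel H G)"
proof -
  define F where "F = {K. K \<lhd> G \<and> H_null H (G Mod K)}"
  have F: "null_kernel H G = \<Inter>F" unfolding F_def null_kernel_def by simp
  have ne: "carrier G \<in> F" unfolding F_def using H_null_whole normal_inv_iff subgroup_self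
    by (simp add: normal_inv_iff subgroup_self)
  have sub: "subgroup (\<Inter>F) G"
    by (rule subgroups_Inter) (use ne in \<open>auto simp: F_def normal_imp_subgroup\<close>)
  show nor: "null_kernel H G \<lhd> G" unfolding F
    using sub ne unfolding normal_inv_iff by (auto simp: F_def normal_inv_iff)
  show "H_null H (G Mod null_kernel H G)"
    unfolding H_null_def
  proof (intro ballI)
    fix f assume f: "f \<in> hom H (G Mod null_kernel H G)"
    show "trivial_homomorphism H (G Mod null_kernel H G) f" unfolding trivial_homomorphism_def
    proof (intro conjI ballI)
    show "f \<in> hom H (G Mod null_kernel H G)" by fact
    fix a assume a: "a \<in> carrier H"
    have "f a \<in> carrier (G Mod null_kernel H G)" using f a hom_carrier by blast
    then obtain x where x: "x \<in> carrier G" "f a = null_kernel H G #> x" by (auto simp: carrier_FactGroup)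
    have "x \<in> K" if K: "K \<in> F" for K
    proof -
      have Kn: "K \<lhd> G" and KN: "H_null H (G Mod K)" using K by (auto simp: F_def)
      have Ks: "subgroup K G" using Kn normal_imp_subgroup by blast
      have hK: "(\<lambda>x. K #> x) \<in> hom G (G Mod K)" using normal.r_coset_hom_Mod[OF Kn] .
      have "null_kernel H G \<subseteq> K" using K F by auto
      have cond: "K #> u = K #> v" if uv: "u \<in> carrier G" "v \<in> carrier G" "null_kernel H G #>\<^bsub>G\<^esub> u = null_kernel H G #>\<^bsub>G\<^esub> v" for u v
      proof -
        have "u \<otimes> inv v \<in> null_kernel H G"
          using uv rcos_eq_iff[OF normal_imp_subgroup[OF nor]] by simp
        then have "u \<otimes> inv v \<in> K" using \<open>null_kernel H G \<subseteq> K\<close> by blast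
        then show "K #> u = K #> v" using rcos_eq_iff[OF Ks uv(1,2)] by simp
      qed
      obtain \<rho> where \<rho>: "\<rho> \<in> hom (G Mod null_kernel H G) (G Mod K)"
        "\<And>x. x \<in> carrier G \<Longrightarrow> \<rho> (null_kernel H G #> x) = K #> x"
        by (rule FactGroup_universal[OF hK nor cond]) auto
      have "\<rho> \<circ> f \<in> hom H (G Mod K)" using \<rho>(1) f Group.hom_compose by blast
      then have "(\<rho> \<circ> f) a = K" using KN a unfolding H_null_def trivial_homomorphism_def by auto
      then have "K #> x = K" using \<rho>(2)[OF x(1)] x(2) by simp
      then show "x \<in> K" using rcos_eq_self_iff[OF Ks x(1)] by simp
    qed
    then have "x \<in> null_kernel H G" using F by blast
    then show "f a = \<one>\<^bsub>G Mod null_kernel H G\<^esub>"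
      using x(2) subgroup.rcos_const[OF normal_imp_subgroup[OF nor] is_group] by simp
  qed
  qed
qed

lemma R_min:
  assumes "K \<lhd> G" "H_null H (G Mod K)"
  shows "null_kernel H G \<subseteq> K"
  using assms unfolding null_kernel_def by blast

lemma R_ker:
  assumes "group G" "group M" "\<psi> \<in> hom G M" "H_null H M"
  shows "null_kernel H G \<subseteq> kernel G M \<psi>"
proof -
  interpret group_hom G M \<psi> using assms by (simp add: group_hom_axioms_def group_hom_def)
  have "H_null H (G Mod kernel G M \<psi>)"
    by (rule H_null_inj[OF normal.factorgroup_is_group[OF normal_kernel] assms(2,4) FactGroup_hom FactGroup_inj_on])
  then show ?thesis using R_min normal_kernel by blast
qed

lemma R_map:
  assumes "group G1" "group G2" "f \<in> hom G1 G2" "x \<in> null_kernel H G1"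
  shows "f x \<in> null_kernel H G2"
proof -
  interpret G2: group G2 by fact
  have n2: "null_kernel H G2 \<lhd> G2" using group.R_facts[OF assms(2)] by blast
  have h: "(\<lambda>y. null_kernel H G2 #>\<^bsub>G2\<^esub> y) \<circ> f \<in> hom G1 (G2 Mod null_kernel H G2)"
    using hom_compose[OF assms(3) normal.r_coset_hom_Mod[OF n2]] .
  have "x \<in> kernel G1 (G2 Mod null_kernel H G2) ((\<lambda>y. null_kernel H G2 #>\<^bsub>G2\<^esub> y) \<circ> f)"
    using R_ker[OF assms(1) normal.factorgroup_is_group[OF n2] h group.R_facts(2)[OF assms(2)]] assms(4) by blast
  then have "null_kernel H G2 #>\<^bsub>G2\<^esub> f x = null_kernel H G2" "f x \<in> carrier G2"
    using assms(3) by (auto simp: kernel_def hom_def)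
  then show ?thesis using G2.rcos_eq_self_iff[OF normal_imp_subgroup[OF n2]] by blast
qed

lemma PH_map_coset:
  assumes "group G1" "group G2" "f \<in> hom G1 G2" "x \<in> carrier G1"
  shows "PH_map H G1 G2 f (null_kernel H G1 #>\<^bsub>G1\<^esub> x) = null_kernel H G2 #>\<^bsub>G2\<^esub> f x"
proof -
  interpret G1: group G1 by fact
  interpret G2: group G2 by fact
  let ?R1 = "null_kernel H G1" and ?R2 = "null_kernel H G2"
  have n1: "?R1 \<lhd> G1" and n2: "?R2 \<lhd> G2" using group.R_facts assms by blast+
  have s1: "?R1 \<subseteq> carrier G1" and s2: "?R2 \<subseteq> carrier G2"
    using n1 n2 normal_imp_subgroup subgroup.subset by blast+
  have fx: "f x \<in> carrier G2" using assms hom_carrier by blast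
  have fm: "\<And>a b. a \<in> carrier G1 \<Longrightarrow> b \<in> carrier G1 \<Longrightarrow> f (a \<otimes>\<^bsub>G1\<^esub> b) = f a \<otimes>\<^bsub>G2\<^esub> f b"
    using assms(3) by (simp add: hom_mult)
  have fc: "\<And>a. a \<in> carrier G1 \<Longrightarrow> f a \<in> carrier G2" using assms(3) hom_carrier by blast
  have conj: "\<And>u h. u \<in> carrier G2 \<Longrightarrow> h \<in> ?R2 \<Longrightarrow> u \<otimes>\<^bsub>G2\<^esub> h \<otimes>\<^bsub>G2\<^esub> inv\<^bsub>G2\<^esub> u \<in> ?R2"
    using n2 G2.normal_inv_iff by blast
  have R2m: "\<And>a b. a \<in> ?R2 \<Longrightarrow> b \<in> ?R2 \<Longrightarrow> a \<otimes>\<^bsub>G2\<^esub> b \<in> ?R2"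
    by (rule subgroup.m_closed[OF normal_imp_subgroup[OF n2]])
  have fR: "\<And>r. r \<in> ?R1 \<Longrightarrow> f r \<in> ?R2" by (rule R_map[OF assms(1,2,3)])
  show ?thesis
  proof (intro Set.set_eqI iffI)
    fix z assume "z \<in> PH_map H G1 G2 f (?R1 #>\<^bsub>G1\<^esub> x)"
    then obtain r1 r2 where r: "r1 \<in> ?R1" "r2 \<in> ?R2" "z = f (r1 \<otimes>\<^bsub>G1\<^esub> x) \<otimes>\<^bsub>G2\<^esub> r2"
      unfolding PH_map_def set_mult_def r_coset_def by blast
    have r1c: "r1 \<in> carrier G1" and r2c: "r2 \<in> carrier G2" using r s1 s2 by auto
    have "z = (f r1 \<otimes>\<^bsub>G2\<^esub> (f x \<otimes>\<^bsub>G2\<^esub> r2 \<otimes>\<^bsub>G2\<^esub> inv\<^bsub>G2\<^esub> f x)) \<otimes>\<^bsub>G2\<^esub> f x"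
      unfolding r(3) fm[OF r1c assms(4)] by (rule G2.aux1[OF fc[OF r1c] fx r2c, symmetric])
    moreover have "f r1 \<otimes>\<^bsub>G2\<^esub> (f x \<otimes>\<^bsub>G2\<^esub> r2 \<otimes>\<^bsub>G2\<^esub> inv\<^bsub>G2\<^esub> f x) \<in> ?R2"
      using R2m[OF fR[OF r(1)] conj[OF fx r(2)]] .
    ultimately show "z \<in> ?R2 #>\<^bsub>G2\<^esub> f x" unfolding r_coset_def by blast
  next
    fix z assume "z \<in> ?R2 #>\<^bsub>G2\<^esub> f x"
    then obtain r where r: "r \<in> ?R2" "z = r \<otimes>\<^bsub>G2\<^esub> f x" unfolding r_coset_def by blast
    have rc: "r \<in> carrier G2" using r s2 by auto
    have e: "f (\<one>\<^bsub>G1\<^esub> \<otimes>\<^bsub>G1\<^esub> x) = f x" using assms(4) by simp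
    have one1: "\<one>\<^bsub>G1\<^esub> \<in> ?R1" using n1 normal_imp_subgroup subgroup.one_closed by blast
    have "z = f (\<one>\<^bsub>G1\<^esub> \<otimes>\<^bsub>G1\<^esub> x) \<otimes>\<^bsub>G2\<^esub> (inv\<^bsub>G2\<^esub> f x \<otimes>\<^bsub>G2\<^esub> r \<otimes>\<^bsub>G2\<^esub> inv\<^bsub>G2\<^esub> (inv\<^bsub>G2\<^esub> f x))"
      unfolding r(2) e by (rule G2.aux2[OF fx rc])
    moreover have "inv\<^bsub>G2\<^esub> f x \<otimes>\<^bsub>G2\<^esub> r \<otimes>\<^bsub>G2\<^esub> inv\<^bsub>G2\<^esub> (inv\<^bsub>G2\<^esub> f x) \<in> ?R2"
      using conj[OF G2.inv_closed[OF fx] r(1)] .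
    ultimately show "z \<in> PH_map H G1 G2 f (?R1 #>\<^bsub>G1\<^esub> x)"
      unfolding PH_map_def set_mult_def r_coset_def using one1 by blast
  qed
qed

lemma PH_map_hom:
  assumes "group G1" "group G2" "f \<in> hom G1 G2"
  shows "PH_map H G1 G2 f \<in> hom (PH H G1) (PH H G2)"
proof -
  interpret G1: group G1 by fact
  interpret G2: group G2 by fact
  have n1: "null_kernel H G1 \<lhd> G1" and n2: "null_kernel H G2 \<lhd> G2" using group.R_facts assms by blast+
  have fc: "\<And>a. a \<in> carrier G1 \<Longrightarrow> f a \<in> carrier G2" using assms(3) hom_carrier by blast
  have cPH: "\<And>G::('z, 'w) monoid_scheme. carrier (PH H G) = (\<lambda>x. null_kernel H G #>\<^bsub>G\<^esub> x) ` carrier G"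
    unfolding PH_def carrier_FactGroup by simp
  have mPH: "\<And>(G::('z, 'w) monoid_scheme) C D. C \<otimes>\<^bsub>PH H G\<^esub> D = C <#>\<^bsub>G\<^esub> D"
    unfolding PH_def by simp
  have co: "\<And>x. x \<in> carrier G1 \<Longrightarrow> PH_map H G1 G2 f (null_kernel H G1 #>\<^bsub>G1\<^esub> x) = null_kernel H G2 #>\<^bsub>G2\<^esub> f x"
    by (rule PH_map_coset[OF assms])
  show ?thesis
  proof (rule homI)
    fix C assume "C \<in> carrier (PH H G1)"
    then obtain x where x: "x \<in> carrier G1" "C = null_kernel H G1 #>\<^bsub>G1\<^esub> x"
      unfolding cPH by blast
    have "PH_map H G1 G2 f C = null_kernel H G2 #>\<^bsub>G2\<^esub> f x" using co x by blast
    then show "PH_map H G1 G2 f C \<in> carrier (PH H G2)"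
      unfolding cPH using fc[OF x(1)] by blast
  next
    fix C D assume "C \<in> carrier (PH H G1)" "D \<in> carrier (PH H G1)"
    then obtain x y where x: "x \<in> carrier G1" "C = null_kernel H G1 #>\<^bsub>G1\<^esub> x"
      and y: "y \<in> carrier G1" "D = null_kernel H G1 #>\<^bsub>G1\<^esub> y"
      unfolding cPH by blast
    have xy: "x \<otimes>\<^bsub>G1\<^esub> y \<in> carrier G1" using x y by blast
    have "C \<otimes>\<^bsub>PH H G1\<^esub> D = null_kernel H G1 #>\<^bsub>G1\<^esub> (x \<otimes>\<^bsub>G1\<^esub> y)"
      unfolding mPH x(2) y(2) by (rule normal.rcos_sum[OF n1 x(1) y(1)])
    then have "PH_map H G1 G2 f (C \<otimes>\<^bsub>PH H G1\<^esub> D) = null_kernel H G2 #>\<^bsub>G2\<^esub> f (x \<otimes>\<^bsub>G1\<^esub> y)"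
      using co[OF xy] by simp
    also have "f (x \<otimes>\<^bsub>G1\<^esub> y) = f x \<otimes>\<^bsub>G2\<^esub> f y" using assms(3) x y by (simp add: hom_mult)
    also have "null_kernel H G2 #>\<^bsub>G2\<^esub> (f x \<otimes>\<^bsub>G2\<^esub> f y) = (null_kernel H G2 #>\<^bsub>G2\<^esub> f x) <#>\<^bsub>G2\<^esub> (null_kernel H G2 #>\<^bsub>G2\<^esub> f y)"
      by (rule normal.rcos_sum[OF n2 fc[OF x(1)] fc[OF y(1)], symmetric])
    also have "\<dots> = PH_map H G1 G2 f C \<otimes>\<^bsub>PH H G2\<^esub> PH_map H G1 G2 f D"
      unfolding mPH using co x y by simp
    finally show "PH_map H G1 G2 f (C \<otimes>\<^bsub>PH H G1\<^esub> D) = PH_map H G1 G2 f C \<otimes>\<^bsub>PH H G2\<^esub> PH_map H G1 G2 f D" .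
  qed
qed



theorem theorem3p2:
  fixes H :: "'h monoid" and N :: "'n monoid" and E :: "'e monoid" and Q :: "'q monoid"
    and Q' :: "'r monoid"
    and i :: "'n \<Rightarrow> 'e" and p :: "'e \<Rightarrow> 'q" and g :: "'r \<Rightarrow> 'q"
  assumes "group H" and "group N" and "group E" and "group Q" and "group Q'"
    and "short_exact N E Q i p"
    and "PH_flat H N E Q i p"
    and "g \<in> hom Q' Q"
  shows "PH_flat H N (pullback_grp E Q' p g) Q' (\<lambda>n. (i n, \<one>\<^bsub>Q'\<^esub>)) snd"
proof -
  interpret N: group N by fact
  interpret E: group E by fact
  interpret Q: group Q by fact
  interpret Q': group Q' by fact
  have gN: "group N" and gE: "group E" and gQ: "group Q" and gQ': "group Q'" by fact+
  have ihom: "i \<in> hom N E" and phom: "p \<in> hom E Q" and iinj: "inj_on i (carrier N)"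
    and iker: "i ` carrier N = kernel E Q p" and psurj: "p ` carrier E = carrier Q"
    using assms(6) unfolding short_exact_def by auto
  have ghom: "g \<in> hom Q' Q" by fact
  interpret i: group_hom N E i using ihom by (simp add: group_hom_def group_hom_axioms_def gN gE)
  interpret p: group_hom E Q p using phom by (simp add: group_hom_def group_hom_axioms_def gQ gE)
  interpret g: group_hom Q' Q g using ghom by (simp add: group_hom_def group_hom_axioms_def gQ gQ')
  have Pinj: "inj_on (PH_map H N E i) (carrier (PH H N))"
    and Pker: "PH_map H N E i ` carrier (PH H N) = kernel (PH H E) (PH H Q) (PH_map H E Q p)"
    using assms(7) unfolding PH_flat_def short_exact_def by auto
  define P where "P = {(x, y). x \<in> carrier E \<and> y \<in> carrier Q' \<and> p x = g y}"
  define E' where "E' = pullback_grp E Q' p g"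
  have E'_eq: "E' = (E \<times>\<times> Q')\<lparr>carrier := P\<rparr>" by (simp add: E'_def pullback_grp_def P_def)
  have gEQ: "group (E \<times>\<times> Q')" using DirProd_group[OF gE gQ'] .
  have subP: "subgroup P (E \<times>\<times> Q')"
  proof (rule group.subgroupI[OF gEQ])
    show "P \<subseteq> carrier (E \<times>\<times> Q')" by (auto simp: P_def)
    have "(\<one>\<^bsub>E\<^esub>, \<one>\<^bsub>Q'\<^esub>) \<in> P" by (simp add: P_def)
    then show "P \<noteq> {}" by blast
  next
    fix a assume "a \<in> P"
    then obtain x y where a: "a = (x, y)" "x \<in> carrier E" "y \<in> carrier Q'" "p x = g y" by (auto simp: P_def)
    then show "inv\<^bsub>E \<times>\<times> Q'\<^esub> a \<in> P" by (simp add: P_def gE gQ')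
  next
    fix a b assume "a \<in> P" "b \<in> P"
    then show "a \<otimes>\<^bsub>E \<times>\<times> Q'\<^esub> b \<in> P" by (auto simp: P_def)
  qed
  have gE': "group E'" unfolding E'_eq by (rule subgroup.subgroup_is_group[OF subP gEQ])
  interpret E': group E' by (rule gE')
  have cE': "carrier E' = P" by (simp add: E'_eq)
  have mE': "\<And>a b. a \<otimes>\<^bsub>E'\<^esub> b = (fst a \<otimes>\<^bsub>E\<^esub> fst b, snd a \<otimes>\<^bsub>Q'\<^esub> snd b)"
    by (simp add: E'_eq mult_DirProd')
  have oE': "\<one>\<^bsub>E'\<^esub> = (\<one>\<^bsub>E\<^esub>, \<one>\<^bsub>Q'\<^esub>)" by (simp add: E'_eq)
  have iE': "\<And>x y. (x, y) \<in> P \<Longrightarrow> inv\<^bsub>E'\<^esub> (x, y) = (inv\<^bsub>E\<^esub> x, inv\<^bsub>Q'\<^esub> y)"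
  proof -
    fix x y assume xy: "(x, y) \<in> P"
    have "inv\<^bsub>E'\<^esub> (x, y) = inv\<^bsub>E \<times>\<times> Q'\<^esub> (x, y)"
      unfolding E'_eq using group.m_inv_consistent[OF gEQ subP xy] .
    also have "\<dots> = (inv\<^bsub>E\<^esub> x, inv\<^bsub>Q'\<^esub> y)" using xy by (simp add: P_def gE gQ')
    finally show "inv\<^bsub>E'\<^esub> (x, y) = (inv\<^bsub>E\<^esub> x, inv\<^bsub>Q'\<^esub> y)" .
  qed
  define i' where "i' = (\<lambda>n. (i n, \<one>\<^bsub>Q'\<^esub>))"
  have pi1: "\<And>n. n \<in> carrier N \<Longrightarrow> p (i n) = \<one>\<^bsub>Q\<^esub>"
    using iker unfolding kernel_def by blast
  have i'hom: "i' \<in> hom N E'"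
  proof (rule homI)
    fix n assume "n \<in> carrier N"
    then show "i' n \<in> carrier E'" using pi1 by (simp add: cE' P_def i'_def)
  next
    fix a b assume "a \<in> carrier N" "b \<in> carrier N"
    then show "i' (a \<otimes>\<^bsub>N\<^esub> b) = i' a \<otimes>\<^bsub>E'\<^esub> i' b" by (simp add: mE' i'_def)
  qed
  have fsthom: "fst \<in> hom E' E"
    by (rule homI) (auto simp: cE' P_def mE')
  have sndhom: "snd \<in> hom E' Q'"
    by (rule homI) (auto simp: cE' P_def mE')
  interpret i': group_hom N E' i' using i'hom by (simp add: group_hom_def group_hom_axioms_def gN gE')
  let ?RN = "null_kernel H N" and ?RE = "null_kernel H E" and ?RQ = "null_kernel H Q"
    and ?RE' = "null_kernel H E'" and ?RQ' = "null_kernel H Q'"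
  have nN: "?RN \<lhd> N" and nE: "?RE \<lhd> E" and nQ: "?RQ \<lhd> Q" and nE': "?RE' \<lhd> E'" and nQ': "?RQ' \<lhd> Q'"
    using N.R_facts E.R_facts Q.R_facts E'.R_facts Q'.R_facts by blast+
  have sN: "subgroup ?RN N" and sE: "subgroup ?RE E" and sQ: "subgroup ?RQ Q"
    and sE': "subgroup ?RE' E'" and sQ': "subgroup ?RQ' Q'"
    using nN nE nQ nE' nQ' normal_imp_subgroup by blast+
  have fstR: "\<And>z. z \<in> ?RE' \<Longrightarrow> fst z \<in> ?RE" by (rule R_map[OF gE' gE fsthom])
  have sndR: "\<And>z. z \<in> ?RE' \<Longrightarrow> snd z \<in> ?RQ'" by (rule R_map[OF gE' gQ' sndhom])
  have i'R: "\<And>n. n \<in> ?RN \<Longrightarrow> i' n \<in> ?RE'" by (rule R_map[OF gN gE' i'hom])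
  have pR: "\<And>x. x \<in> ?RE \<Longrightarrow> p x \<in> ?RQ" by (rule R_map[OF gE gQ phom])
  have RE'P: "?RE' \<subseteq> P" using sE' subgroup.subset cE' by blast
  have cPH: "\<And>G::('z, 'w) monoid_scheme. carrier (PH H G) = (\<lambda>x. null_kernel H G #>\<^bsub>G\<^esub> x) ` carrier G"
    unfolding PH_def carrier_FactGroup by simp
  have oPH: "\<And>G::('z, 'w) monoid_scheme. \<one>\<^bsub>PH H G\<^esub> = null_kernel H G"
    unfolding PH_def by simp
  have F1: "\<And>n. n \<in> carrier N \<Longrightarrow> i n \<in> ?RE \<Longrightarrow> n \<in> ?RN"
  proof -
    fix n assume n: "n \<in> carrier N" and inR: "i n \<in> ?RE"
    have "PH_map H N E i (?RN #>\<^bsub>N\<^esub> n) = ?RE #>\<^bsub>E\<^esub> i n"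
      by (rule PH_map_coset[OF gN gE ihom n])
    also have "\<dots> = ?RE" using E.rcos_eq_self_iff[OF sE] inR n by simp
    also have "\<dots> = ?RE #>\<^bsub>E\<^esub> i \<one>\<^bsub>N\<^esub>" using E.coset_mult_one[OF subgroup.subset[OF sE]] by simp
    also have "\<dots> = PH_map H N E i (?RN #>\<^bsub>N\<^esub> \<one>\<^bsub>N\<^esub>)"
      by (rule PH_map_coset[OF gN gE ihom N.one_closed, symmetric])
    finally have "?RN #>\<^bsub>N\<^esub> n = ?RN #>\<^bsub>N\<^esub> \<one>\<^bsub>N\<^esub>"
      using Pinj n unfolding cPH inj_on_def by blast
    then show "n \<in> ?RN" using N.rcos_eq_self_iff[OF sN n] N.coset_mult_one[OF subgroup.subset[OF sN]] by simp
  qed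
  have F2: "\<And>q. q \<in> ?RQ \<Longrightarrow> \<exists>x\<in>?RE. p x = q"
  proof -
    fix q assume q: "q \<in> ?RQ"
    then have qc: "q \<in> carrier Q" using sQ subgroup.subset by blast
    then have "q \<in> p ` carrier E" using psurj by simp
    then obtain x0 where x0: "x0 \<in> carrier E" "p x0 = q" by blast
    have "PH_map H E Q p (?RE #>\<^bsub>E\<^esub> x0) = ?RQ #>\<^bsub>Q\<^esub> q"
      using PH_map_coset[OF gE gQ phom x0(1)] x0(2) by simp
    also have "\<dots> = ?RQ" using Q.rcos_eq_self_iff[OF sQ] q \<open>q \<in> carrier Q\<close> by simp
    finally have "?RE #>\<^bsub>E\<^esub> x0 \<in> kernel (PH H E) (PH H Q) (PH_map H E Q p)"
      unfolding kernel_def oPH cPH using x0(1) by blast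
    then obtain n where n: "n \<in> carrier N" "?RE #>\<^bsub>E\<^esub> x0 = PH_map H N E i (?RN #>\<^bsub>N\<^esub> n)"
      unfolding Pker[symmetric] cPH by blast
    then have "?RE #>\<^bsub>E\<^esub> x0 = ?RE #>\<^bsub>E\<^esub> i n" using PH_map_coset[OF gN gE ihom n(1)] by simp
    then have d: "x0 \<otimes>\<^bsub>E\<^esub> inv\<^bsub>E\<^esub> i n \<in> ?RE" using E.rcos_eq_iff[OF sE x0(1)] n(1) by simp
    have "p (x0 \<otimes>\<^bsub>E\<^esub> inv\<^bsub>E\<^esub> i n) = q" using x0 n(1) pi1 qc by simp
    then show "\<exists>x\<in>?RE. p x = q" using d by blast
  qed
  define S where "S = snd ` ?RE'"
  have sndsurj: "snd ` carrier E' = carrier Q'"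
  proof
    show "snd ` carrier E' \<subseteq> carrier Q'" by (auto simp: cE' P_def)
  next
    show "carrier Q' \<subseteq> snd ` carrier E'"
    proof
      fix y assume y: "y \<in> carrier Q'"
      have "g y \<in> p ` carrier E" unfolding psurj using y by simp
      then obtain x where x: "g y = p x" "x \<in> carrier E" by (rule imageE)
      then have "(x, y) \<in> carrier E'" using y by (simp add: cE' P_def)
      then show "y \<in> snd ` carrier E'" by force
    qed
  qed
  have snd_gh: "group_hom E' Q' snd" using sndhom by (simp add: group_hom_def group_hom_axioms_def gE' gQ')
  have nS: "S \<lhd> Q'" unfolding S_def by (rule normal.surj_hom_normal_subgroup[OF nE' snd_gh sndsurj])
  have sS: "subgroup S Q'" using nS normal_imp_subgroup by blast
  have KEY: "\<And>x y. (x, y) \<in> P \<Longrightarrow> x \<in> ?RE \<Longrightarrow> y \<in> S \<Longrightarrow> (x, y) \<in> ?RE'"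
  proof -
    fix x y assume xyP: "(x, y) \<in> P" and xR: "x \<in> ?RE" and yS: "y \<in> S"
    obtain e where eR: "(e, y) \<in> ?RE'" using yS unfolding S_def by force
    have eP: "(e, y) \<in> P" using eR RE'P by blast
    have e: "e \<in> carrier E" "p e = g y" using eP by (auto simp: P_def)
    have x: "x \<in> carrier E" "p x = g y" using xyP by (auto simp: P_def)
    have yc: "y \<in> carrier Q'" using xyP by (auto simp: P_def)
    have eRE: "e \<in> ?RE" using fstR[OF eR] by simp
    define d where "d = x \<otimes>\<^bsub>E\<^esub> inv\<^bsub>E\<^esub> e"
    have dc: "d \<in> carrier E" using x e by (simp add: d_def)
    have dR: "d \<in> ?RE" unfolding d_def
      using subgroup.m_closed[OF sE xR subgroup.m_inv_closed[OF sE eRE]] .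
    have "p d = \<one>\<^bsub>Q\<^esub>" using x e yc by (simp add: d_def)
    then have "d \<in> kernel E Q p" using dc by (simp add: kernel_def)
    then obtain n where n: "n \<in> carrier N" "d = i n" using iker by (metis imageE)
    have nR: "n \<in> ?RN" using F1[OF n(1)] dR n(2) by simp
    have "i' n \<otimes>\<^bsub>E'\<^esub> (e, y) \<in> ?RE'"
      using subgroup.m_closed[OF sE' i'R[OF nR] eR] .
    moreover have "i' n \<otimes>\<^bsub>E'\<^esub> (e, y) = (x, y)"
    proof -
      have "i' n \<otimes>\<^bsub>E'\<^esub> (e, y) = (d \<otimes>\<^bsub>E\<^esub> e, y)" using yc n by (simp add: mE' i'_def)
      also have "d \<otimes>\<^bsub>E\<^esub> e = x" using x e by (simp add: d_def E.m_assoc)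
      finally show ?thesis .
    qed
    ultimately show "(x, y) \<in> ?RE'" by simp
  qed
  have SP: "\<And>s. s \<in> S \<Longrightarrow> \<exists>e. (e, s) \<in> ?RE' \<and> e \<in> ?RE \<and> p e = g s"
  proof -
    fix s assume "s \<in> S"
    then obtain e where eR: "(e, s) \<in> ?RE'" unfolding S_def by force
    have "(e, s) \<in> P" using eR RE'P by blast
    then have "p e = g s" by (simp add: P_def)
    moreover have "e \<in> ?RE" using fstR[OF eR] by simp
    ultimately show "\<exists>e. (e, s) \<in> ?RE' \<and> e \<in> ?RE \<and> p e = g s" using eR by blast
  qed
  have gSR: "\<And>s. s \<in> S \<Longrightarrow> g s \<in> ?RQ"
  proof -
    fix s assume "s \<in> S"
    then obtain e where "e \<in> ?RE" "p e = g s" using SP by blast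
    then show "g s \<in> ?RQ" using pR by metis
  qed
  have gQS: "group (Q' Mod S)" using normal.factorgroup_is_group[OF nS] .
  have gQR: "group (Q Mod ?RQ)" using normal.factorgroup_is_group[OF nQ] .
  have gER: "group (E Mod ?RE)" using normal.factorgroup_is_group[OF nE] .
  have gE'R: "group (E' Mod ?RE')" using normal.factorgroup_is_group[OF nE'] .
  have nulQ: "H_null H (Q Mod ?RQ)" using Q.R_facts(2) .
  have nulE': "H_null H (E' Mod ?RE')" using E'.R_facts(2) .
  define M where "M = (E Mod ?RE) \<times>\<times> (Q' Mod S)"
  have gM: "group M" unfolding M_def using DirProd_group[OF gER gQS] .
  define \<psi> where "\<psi> = (\<lambda>z. (?RE #>\<^bsub>E\<^esub> fst z, S #>\<^bsub>Q'\<^esub> snd z))"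
  have \<psi>hom: "\<psi> \<in> hom E' M"
  proof (rule homI)
    fix z assume "z \<in> carrier E'"
    then have "fst z \<in> carrier E" "snd z \<in> carrier Q'" by (auto simp: cE' P_def)
    then show "\<psi> z \<in> carrier M" unfolding M_def \<psi>_def by (simp add: carrier_FactGroup)
  next
    fix z w assume "z \<in> carrier E'" "w \<in> carrier E'"
    then have c: "fst z \<in> carrier E" "snd z \<in> carrier Q'" "fst w \<in> carrier E" "snd w \<in> carrier Q'"
      by (auto simp: cE' P_def)
    show "\<psi> (z \<otimes>\<^bsub>E'\<^esub> w) = \<psi> z \<otimes>\<^bsub>M\<^esub> \<psi> w"
      unfolding M_def \<psi>_def mE'
      using normal.rcos_sum[OF nE c(1) c(3)] normal.rcos_sum[OF nS c(2) c(4)] by simp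
  qed
  interpret \<psi>: group_hom E' M \<psi> using \<psi>hom by (simp add: group_hom_def group_hom_axioms_def gE' gM)
  define M' where "M' = M\<lparr>carrier := \<psi> ` carrier E'\<rparr>"
  have subIm: "subgroup (\<psi> ` carrier E') M" by (rule \<psi>.img_is_subgroup)
  have gM': "group M'" unfolding M'_def by (rule subgroup.subgroup_is_group[OF subIm gM])
  have \<psi>hom': "\<psi> \<in> hom E' M'"
    using \<psi>hom unfolding M'_def hom_def by auto
  interpret \<psi>': group_hom E' M' \<psi> using \<psi>hom' by (simp add: group_hom_def group_hom_axioms_def gE' gM')
  have oM': "\<one>\<^bsub>M'\<^esub> = (?RE, S)" by (simp add: M'_def M_def)
  have kerpsi: "kernel E' M' \<psi> = ?RE'"
  proof
    show "kernel E' M' \<psi> \<subseteq> ?RE'"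
    proof
      fix z assume "z \<in> kernel E' M' \<psi>"
      then have z: "z \<in> P" "?RE #>\<^bsub>E\<^esub> fst z = ?RE" "S #>\<^bsub>Q'\<^esub> snd z = S"
        unfolding kernel_def oM' \<psi>_def cE' by auto
      have c: "fst z \<in> carrier E" "snd z \<in> carrier Q'" using z(1) by (auto simp: P_def)
      have "fst z \<in> ?RE" using E.rcos_eq_self_iff[OF sE c(1)] z(2) by simp
      moreover have "snd z \<in> S" using Q'.rcos_eq_self_iff[OF sS c(2)] z(3) by simp
      ultimately show "z \<in> ?RE'" using KEY[of "fst z" "snd z"] z(1) by simp
    qed
  next
    show "?RE' \<subseteq> kernel E' M' \<psi>"
    proof
      fix z assume zR: "z \<in> ?RE'"
      have zP: "z \<in> P" using zR RE'P by blast
      have c: "fst z \<in> carrier E" "snd z \<in> carrier Q'" using zP by (auto simp: P_def)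
      have "?RE #>\<^bsub>E\<^esub> fst z = ?RE" using E.rcos_eq_self_iff[OF sE c(1)] fstR[OF zR] by simp
      moreover have "S #>\<^bsub>Q'\<^esub> snd z = S" using Q'.rcos_eq_self_iff[OF sS c(2)] zR by (simp add: S_def)
      ultimately show "z \<in> kernel E' M' \<psi>" unfolding kernel_def oM' \<psi>_def cE' using zP by simp
    qed
  qed
  have nulM': "H_null H M'"
  proof (rule H_null_iso[OF gE'R gM' nulE'])
    have "\<psi> ` carrier E' = carrier M'" by (simp add: M'_def)
    from \<psi>'.FactGroup_iso_set[OF this]
    show "(\<lambda>C. the_elem (\<psi> ` C)) \<in> iso (E' Mod ?RE') M'" unfolding kerpsi .
  qed
  have nulQS: "H_null H (Q' Mod S)"
    unfolding H_null_def
  proof (intro ballI)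
    fix h assume h: "h \<in> hom H (Q' Mod S)"
    show "trivial_homomorphism H (Q' Mod S) h" unfolding trivial_homomorphism_def
    proof (intro conjI ballI)
      show "h \<in> hom H (Q' Mod S)" by fact
      \<comment> \<open>composite to P_H Q is trivial\<close>
      have cond: "?RQ #>\<^bsub>Q\<^esub> g u = ?RQ #>\<^bsub>Q\<^esub> g v"
        if uv: "u \<in> carrier Q'" "v \<in> carrier Q'" "S #>\<^bsub>Q'\<^esub> u = S #>\<^bsub>Q'\<^esub> v" for u v
      proof -
        have "u \<otimes>\<^bsub>Q'\<^esub> inv\<^bsub>Q'\<^esub> v \<in> S" using Q'.rcos_eq_iff[OF sS uv(1,2)] uv(3) by simp
        then have "g (u \<otimes>\<^bsub>Q'\<^esub> inv\<^bsub>Q'\<^esub> v) \<in> ?RQ" by (rule gSR)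
        then have "g u \<otimes>\<^bsub>Q\<^esub> inv\<^bsub>Q\<^esub> g v \<in> ?RQ" using uv by simp
        then show ?thesis using Q.rcos_eq_iff[OF sQ] uv by simp
      qed
      have cond': "((\<lambda>y. ?RQ #>\<^bsub>Q\<^esub> y) \<circ> g) u = ((\<lambda>y. ?RQ #>\<^bsub>Q\<^esub> y) \<circ> g) v"
        if uv: "u \<in> carrier Q'" "v \<in> carrier Q'" "S #>\<^bsub>Q'\<^esub> u = S #>\<^bsub>Q'\<^esub> v" for u v
        using cond[OF uv] by simp
      have gh: "(\<lambda>y. ?RQ #>\<^bsub>Q\<^esub> y) \<circ> g \<in> hom Q' (Q Mod ?RQ)"
        using hom_compose[OF ghom normal.r_coset_hom_Mod[OF nQ]] .
      obtain \<rho> where \<rho>: "\<rho> \<in> hom (Q' Mod S) (Q Mod ?RQ)"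
        "\<And>y. y \<in> carrier Q' \<Longrightarrow> \<rho> (S #>\<^bsub>Q'\<^esub> y) = ((\<lambda>y. ?RQ #>\<^bsub>Q\<^esub> y) \<circ> g) y"
        by (rule FactGroup_universal[OF gh nS cond']) auto
      have claim: "(?RE, h a) \<in> \<psi> ` carrier E'" if a: "a \<in> carrier H" for a
      proof -
        have "h a \<in> carrier (Q' Mod S)" using h a hom_carrier by blast
        then obtain y where y: "y \<in> carrier Q'" "h a = S #>\<^bsub>Q'\<^esub> y" by (auto simp: carrier_FactGroup)
        have "\<rho> \<circ> h \<in> hom H (Q Mod ?RQ)" using \<rho>(1) h hom_compose by blast
        then have "(\<rho> \<circ> h) a = ?RQ" using nulQ a unfolding H_null_def trivial_homomorphism_def by auto
        then have "?RQ #>\<^bsub>Q\<^esub> g y = ?RQ" using \<rho>(2)[OF y(1)] y(2) by simp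
        then have "g y \<in> ?RQ" using Q.rcos_eq_self_iff[OF sQ] y(1) by simp
        then obtain x where x: "x \<in> ?RE" "p x = g y" using F2 by blast
        have xc: "x \<in> carrier E" using x(1) sE subgroup.subset by blast
        have "(x, y) \<in> carrier E'" using xc x(2) y(1) by (simp add: cE' P_def)
        moreover have "\<psi> (x, y) = (?RE, h a)"
          using E.rcos_eq_self_iff[OF sE xc] x(1) y(2) by (simp add: \<psi>_def)
        ultimately show ?thesis by (metis image_eqI)
      qed
      have \<phi>hom: "(\<lambda>a. (?RE, h a)) \<in> hom H M'"
      proof (rule homI)
        fix a assume "a \<in> carrier H"
        then show "(?RE, h a) \<in> carrier M'" using claim by (simp add: M'_def)
      next
        fix a b assume ab: "a \<in> carrier H" "b \<in> carrier H"
        have "?RE <#>\<^bsub>E\<^esub> ?RE = ?RE" by (rule E.subgroup_mult_id[OF sE])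
        then show "(?RE, h (a \<otimes>\<^bsub>H\<^esub> b)) = (?RE, h a) \<otimes>\<^bsub>M'\<^esub> (?RE, h b)"
          using h ab by (simp add: M'_def M_def hom_mult)
      qed
      fix a assume a: "a \<in> carrier H"
      have "trivial_homomorphism H M' (\<lambda>a. (?RE, h a))" using nulM' \<phi>hom unfolding H_null_def by blast
      then have "\<forall>x\<in>carrier H. (?RE, h x) = \<one>\<^bsub>M'\<^esub>" unfolding trivial_homomorphism_def by simp
      then have "(?RE, h a) = \<one>\<^bsub>M'\<^esub>" using a by blast
      then show "h a = \<one>\<^bsub>Q' Mod S\<^esub>" using oM' by simp
    qed
  qed
  have RQ'S: "?RQ' \<subseteq> S" by (rule R_min[OF nS nulQS])
  have coN: "\<And>n. n \<in> carrier N \<Longrightarrow> PH_map H N E' i' (?RN #>\<^bsub>N\<^esub> n) = ?RE' #>\<^bsub>E'\<^esub> i' n"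
    by (rule PH_map_coset[OF gN gE' i'hom])
  have coE: "\<And>z. z \<in> carrier E' \<Longrightarrow> PH_map H E' Q' snd (?RE' #>\<^bsub>E'\<^esub> z) = ?RQ' #>\<^bsub>Q'\<^esub> snd z"
    by (rule PH_map_coset[OF gE' gQ' sndhom])
  have c1: "PH_map H N E' i' \<in> hom (PH H N) (PH H E')" by (rule PH_map_hom[OF gN gE' i'hom])
  have c2: "PH_map H E' Q' snd \<in> hom (PH H E') (PH H Q')" by (rule PH_map_hom[OF gE' gQ' sndhom])
  have c3: "inj_on (PH_map H N E' i') (carrier (PH H N))"
  proof (rule inj_onI)
    fix C1 C2 assume C1: "C1 \<in> carrier (PH H N)" and C2: "C2 \<in> carrier (PH H N)"
      and eq: "PH_map H N E' i' C1 = PH_map H N E' i' C2"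
    obtain n1 where n1: "n1 \<in> carrier N" "C1 = ?RN #>\<^bsub>N\<^esub> n1" using C1 unfolding cPH by blast
    obtain n2 where n2: "n2 \<in> carrier N" "C2 = ?RN #>\<^bsub>N\<^esub> n2" using C2 unfolding cPH by blast
    have "?RE' #>\<^bsub>E'\<^esub> i' n1 = ?RE' #>\<^bsub>E'\<^esub> i' n2" using eq n1 n2 coN by simp
    then have "i' n1 \<otimes>\<^bsub>E'\<^esub> inv\<^bsub>E'\<^esub> i' n2 \<in> ?RE'"
      using E'.rcos_eq_iff[OF sE'] n1(1) n2(1) by simp
    then have "i' (n1 \<otimes>\<^bsub>N\<^esub> inv\<^bsub>N\<^esub> n2) \<in> ?RE'" using n1(1) n2(1) by simp
    then have "fst (i' (n1 \<otimes>\<^bsub>N\<^esub> inv\<^bsub>N\<^esub> n2)) \<in> ?RE" by (rule fstR)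
    then have "i (n1 \<otimes>\<^bsub>N\<^esub> inv\<^bsub>N\<^esub> n2) \<in> ?RE" by (simp add: i'_def)
    then have "n1 \<otimes>\<^bsub>N\<^esub> inv\<^bsub>N\<^esub> n2 \<in> ?RN" using F1 n1(1) n2(1) by simp
    then show "C1 = C2" using N.rcos_eq_iff[OF sN n1(1) n2(1)] n1(2) n2(2) by simp
  qed
  have c4: "PH_map H N E' i' ` carrier (PH H N) = kernel (PH H E') (PH H Q') (PH_map H E' Q' snd)"
  proof (intro equalityI subsetI)
    fix C assume "C \<in> PH_map H N E' i' ` carrier (PH H N)"
    then obtain n where n: "n \<in> carrier N" "C = PH_map H N E' i' (?RN #>\<^bsub>N\<^esub> n)"
      unfolding cPH by blast
    have Cc: "C \<in> carrier (PH H E')" using n c1 hom_carrier[OF c1] unfolding cPH by blast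
    have "C = ?RE' #>\<^bsub>E'\<^esub> i' n" using n coN by simp
    have i'c: "i' n \<in> carrier E'" using i'hom n(1) hom_carrier by blast
    have "snd (i' n) = \<one>\<^bsub>Q'\<^esub>" by (simp add: i'_def)
    then have "PH_map H E' Q' snd C = ?RQ' #>\<^bsub>Q'\<^esub> \<one>\<^bsub>Q'\<^esub>" using coE[OF i'c] \<open>C = ?RE' #>\<^bsub>E'\<^esub> i' n\<close> by simp
    also have "\<dots> = ?RQ'" using Q'.coset_mult_one[OF subgroup.subset[OF sQ']] .
    finally show "C \<in> kernel (PH H E') (PH H Q') (PH_map H E' Q' snd)"
      unfolding kernel_def oPH using Cc by simp
  next
    fix C assume "C \<in> kernel (PH H E') (PH H Q') (PH_map H E' Q' snd)"
    then have Cc: "C \<in> carrier (PH H E')" and Ck: "PH_map H E' Q' snd C = ?RQ'"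
      unfolding kernel_def oPH by auto
    obtain z where z: "z \<in> carrier E'" "C = ?RE' #>\<^bsub>E'\<^esub> z" using Cc unfolding cPH by blast
    obtain x y where xy: "z = (x, y)" by (cases z)
    have zP: "(x, y) \<in> P" using z(1) xy cE' by simp
    have xc: "x \<in> carrier E" and yc: "y \<in> carrier Q'" and pxgy: "p x = g y" using zP by (auto simp: P_def)
    have "?RQ' #>\<^bsub>Q'\<^esub> y = ?RQ'" using Ck coE[OF z(1)] z(2) xy by simp
    then have "y \<in> ?RQ'" using Q'.rcos_eq_self_iff[OF sQ' yc] by simp
    then have yS: "y \<in> S" using RQ'S by blast
    then obtain e where e: "(e, y) \<in> ?RE'" "e \<in> ?RE" "p e = g y" using SP by blast
    have ec: "e \<in> carrier E" using e(2) sE subgroup.subset by blast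
    define d where "d = x \<otimes>\<^bsub>E\<^esub> inv\<^bsub>E\<^esub> e"
    have dc: "d \<in> carrier E" using xc ec by (simp add: d_def)
    have "p d = \<one>\<^bsub>Q\<^esub>" using xc ec pxgy e(3) yc by (simp add: d_def)
    then have "d \<in> kernel E Q p" using dc by (simp add: kernel_def)
    then obtain n where n: "n \<in> carrier N" "d = i n" using iker by (metis imageE)
    have "i n \<otimes>\<^bsub>E\<^esub> e = x" unfolding n(2)[symmetric] d_def using xc ec by (simp add: E.m_assoc)
    then have xde: "x = i n \<otimes>\<^bsub>E\<^esub> e" by simp
    have "x \<otimes>\<^bsub>E\<^esub> inv\<^bsub>E\<^esub> i n = i n \<otimes>\<^bsub>E\<^esub> e \<otimes>\<^bsub>E\<^esub> inv\<^bsub>E\<^esub> i n" using xde by simp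
    also have "\<dots> \<in> ?RE" using nE E.normal_inv_iff e(2) n(1) by simp
    finally have x1: "x \<otimes>\<^bsub>E\<^esub> inv\<^bsub>E\<^esub> i n \<in> ?RE" .
    have i'nP: "i' n \<in> P" using i'hom n(1) hom_carrier cE' by blast
    have i'c2: "i' n \<in> carrier E'" using i'nP cE' by simp
    have prodP: "z \<otimes>\<^bsub>E'\<^esub> inv\<^bsub>E'\<^esub> i' n \<in> P" using E'.m_closed[OF z(1) E'.inv_closed[OF i'c2]] cE' by simp
    have prod: "z \<otimes>\<^bsub>E'\<^esub> inv\<^bsub>E'\<^esub> i' n = (x \<otimes>\<^bsub>E\<^esub> inv\<^bsub>E\<^esub> i n, y)"
      using iE'[of "i n" "\<one>\<^bsub>Q'\<^esub>"] i'nP xy yc by (simp add: i'_def mE')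
    have "z \<otimes>\<^bsub>E'\<^esub> inv\<^bsub>E'\<^esub> i' n \<in> ?RE'"
      using KEY[OF _ x1 yS] prodP prod by simp
    then have "?RE' #>\<^bsub>E'\<^esub> z = ?RE' #>\<^bsub>E'\<^esub> i' n"
      using E'.rcos_eq_iff[OF sE' z(1)] n(1) by simp
    then have "C = PH_map H N E' i' (?RN #>\<^bsub>N\<^esub> n)" using z(2) coN[OF n(1)] by simp
    moreover have "?RN #>\<^bsub>N\<^esub> n \<in> carrier (PH H N)" using n(1) unfolding cPH by blast
    ultimately show "C \<in> PH_map H N E' i' ` carrier (PH H N)" by blast
  qed
  have c5: "PH_map H E' Q' snd ` carrier (PH H E') = carrier (PH H Q')"
  proof (intro equalityI subsetI)
    fix D assume "D \<in> PH_map H E' Q' snd ` carrier (PH H E')"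
    then show "D \<in> carrier (PH H Q')" using hom_carrier[OF c2] by blast
  next
    fix D assume "D \<in> carrier (PH H Q')"
    then obtain y where y: "y \<in> carrier Q'" "D = ?RQ' #>\<^bsub>Q'\<^esub> y" unfolding cPH by blast
    have "y \<in> snd ` carrier E'" using sndsurj y(1) by simp
    then obtain z where z: "y = snd z" "z \<in> carrier E'" by (rule imageE)
    have "D = PH_map H E' Q' snd (?RE' #>\<^bsub>E'\<^esub> z)" using coE[OF z(2)] z(1) y(2) by simp
    moreover have "?RE' #>\<^bsub>E'\<^esub> z \<in> carrier (PH H E')" using z(2) unfolding cPH by blast
    ultimately show "D \<in> PH_map H E' Q' snd ` carrier (PH H E')" by blast
  qed
  show ?thesis
    unfolding PH_flat_def short_exact_def E'_def[symmetric] i'_def[symmetric]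
    using c1 c2 c3 c4 c5 by blast
qed

end
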